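(* Let $X$ be a finite Abelian group containing no elements of order $2$, and let $\alpha$ be an automorphism of $X$. Set $K=\mathrm{Ker}(I+\alpha)$, where $I$ is the identity automorphism. Let $\xi_1$ and $\xi_2$ be independent random variables with values in $X$ and distributions $\mu_1$ and $\mu_2$ whose characteristic functions $\hat\mu_1,\hat\mu_2$ do not vanish anywhere on the character group $Y$ of $X$. Assume that the conditional distribution of the linear form $L_2=\xi_1+\alpha\xi_2$ given $L_1=\xi_1+\xi_2$ is symmetric. Then $\mu_j=\omega*E_{x_j}$, $j=1,2$, where $\omega$ is a distribution supported in $K$ and $x_1,x_2\in X$.
   Context: For a locally compact Abelian group $X$ with character group $Y$, the characteristic function of a probability distribution $\mu$ on $X$ is $\hat\mu(y)=\int_X (x,y)\,d\mu(x)$, $y\in Y$, where $(x,y)$ is the value of the character $y$ at $x$. $E_x$ denotes the degenerate distribution concentrated at $x\in X$, and $*$ denotes convolution. "The conditional distribution of $L_2$ given $L_1$ is symmetric" means that the random vectors $(L_1,L_2)$ and $(L_1,-L_2)$ have the same distribution. *)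

theory Defs
  imports "HOL-Probability.Probability"
begin

text \<open>A (continuous, since X is finite and discrete) character of the additive group X:
  a homomorphism into the multiplicative circle group.\<close>
definition is_character :: "('a::ab_group_add \<Rightarrow> complex) \<Rightarrow> bool" where
  "is_character ch \<longleftrightarrow> (\<forall>x y. ch (x + y) = ch x * ch y) \<and> (\<forall>x. cmod (ch x) = 1)"

definition char_fun :: "'a::{finite,ab_group_add} pmf \<Rightarrow> ('a \<Rightarrow> complex) \<Rightarrow> complex" where
  "char_fun \<mu> ch = (\<Sum>x\<in>UNIV. complex_of_real (pmf \<mu> x) * ch x)"

definition group_automorphism :: "('a::ab_group_add \<Rightarrow> 'a) \<Rightarrow> bool" where
  "group_automorphism \<alpha> \<longleftrightarrow> bij \<alpha> \<and> (\<forall>x y. \<alpha> (x + y) = \<alpha> x + \<alpha> y)"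

definition conv_pmf :: "'a::ab_group_add pmf \<Rightarrow> 'a pmf \<Rightarrow> 'a pmf" (infixl "\<star>\<^sub>c" 70) where
  "conv_pmf \<mu> \<nu> = map_pmf (\<lambda>(a, b). a + b) (pair_pmf \<mu> \<nu>)"

abbreviation degenerate :: "'a \<Rightarrow> 'a pmf" ("E") where
  "E x \<equiv> return_pmf x"

end

theory Submission
  imports Defs
begin


fun nsm :: "nat \<Rightarrow> 'a::ab_group_add \<Rightarrow> 'a" where
  "nsm 0 g = 0"
| "nsm (Suc n) g = g + nsm n g"

lemma nsm_add: "nsm (m + n) g = nsm m g + nsm n g"
  by (induction m) (auto simp: add.assoc)

lemma nsm_mult: "nsm (m * n) g = nsm n (nsm m g)"
  by (induction n) (auto simp: nsm_add mult.commute)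

lemma nsm_one[simp]: "nsm 1 g = g" by simp

definition subgrp :: "'a::ab_group_add set \<Rightarrow> bool" where
  "subgrp H \<longleftrightarrow> 0 \<in> H \<and> (\<forall>a\<in>H. \<forall>b\<in>H. a + b \<in> H) \<and> (\<forall>a\<in>H. - a \<in> H)"

definition hom_on :: "'a::ab_group_add set \<Rightarrow> ('a \<Rightarrow> complex) \<Rightarrow> bool" where
  "hom_on H c \<longleftrightarrow> (\<forall>a\<in>H. \<forall>b\<in>H. c (a + b) = c a * c b) \<and> (\<forall>a\<in>H. cmod (c a) = 1)"

lemma subgrp_diff: "subgrp H \<Longrightarrow> a \<in> H \<Longrightarrow> b \<in> H \<Longrightarrow> a - b \<in> H"
  unfolding subgrp_def by (metis diff_conv_add_uminus)

lemma subgrp_nsm: "subgrp H \<Longrightarrow> a \<in> H \<Longrightarrow> nsm n a \<in> H"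
  by (induction n) (auto simp: subgrp_def)

lemma hom_on_zero: "subgrp H \<Longrightarrow> hom_on H c \<Longrightarrow> c 0 = 1"
proof -
  assume h: "subgrp H" "hom_on H c"
  then have "c 0 = c 0 * c 0" "cmod (c 0) = 1" unfolding hom_on_def subgrp_def
    by (metis add_0)+
  then show ?thesis by (metis mult_cancel_right2 norm_zero zero_neq_one)
qed

lemma hom_on_nsm: "subgrp H \<Longrightarrow> hom_on H c \<Longrightarrow> a \<in> H \<Longrightarrow> c (nsm n a) = c a ^ n"
proof (induction n)
  case 0 then show ?case by (simp add: hom_on_zero)
next
  case (Suc n)
  then show ?case using subgrp_nsm[of H a n] unfolding hom_on_def by simp
qed

lemma ex_order:
  fixes x :: "'a::{finite,ab_group_add}"
  shows "\<exists>n. 0 < n \<and> n \<le> CARD('a) \<and> nsm n x = 0"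
proof -
  have "\<not> inj_on (\<lambda>n. nsm n x) {0..CARD('a)}"
  proof
    assume "inj_on (\<lambda>n. nsm n x) {0..CARD('a)}"
    then have "card ((\<lambda>n. nsm n x) ` {0..CARD('a)}) = CARD('a) + 1"
      by (simp add: card_image)
    moreover have "card ((\<lambda>n. nsm n x) ` {0..CARD('a)}) \<le> CARD('a)"
      by (rule card_mono) auto
    ultimately show False by simp
  qed
  then obtain i j where ij: "i \<in> {0..CARD('a)}" "j \<in> {0..CARD('a)}" "i \<noteq> j" "nsm i x = nsm j x"
    unfolding inj_on_def by blast
  show ?thesis
  proof (cases "i < j")
    case True
    have "nsm j x = nsm (j - i) x + nsm i x" using nsm_add[of "j-i" i x] True by simp
    then have "nsm (j - i) x = 0" using ij by simp
    then show ?thesis using True ij by (intro exI[of _ "j-i"]) auto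
  next
    case False
    then have "j < i" using ij by simp
    have "nsm i x = nsm (i - j) x + nsm j x" using nsm_add[of "i-j" j x] \<open>j<i\<close> by simp
    then have "nsm (i - j) x = 0" using ij by simp
    then show ?thesis using \<open>j<i\<close> ij by (intro exI[of _ "i-j"]) auto
  qed
qed

lemma ext_step:
  fixes H :: "'a::ab_group_add set"
  assumes sg: "subgrp H" and hc: "hom_on H c" and gH: "g \<notin> H" and m0: "0 < m"
    and mH: "nsm m g \<in> H"
    and mmin: "\<forall>k. 0 < k \<and> k < m \<longrightarrow> nsm k g \<notin> H"
    and z1: "cmod z = 1" and zm: "z ^ m = c (nsm m g)"
  shows "\<exists>c'. subgrp {a + nsm k g | a k. a \<in> H} \<and> hom_on {a + nsm k g | a k. a \<in> H} c'
     \<and> (\<forall>a\<in>H. c' a = c a) \<and> c' g = z"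
proof -
  have dvd: "nsm k g \<in> H \<longleftrightarrow> m dvd k" for k
  proof
    assume "m dvd k"
    then obtain q where "k = m * q" by auto
    then show "nsm k g \<in> H" using subgrp_nsm[OF sg mH, of q] by (simp add: nsm_mult)
  next
    assume kH: "nsm k g \<in> H"
    have "nsm k g = nsm (k mod m) g + nsm (m * (k div m)) g"
      using nsm_add[of "k mod m" "m * (k div m)" g] by simp
    then have "nsm (k mod m) g = nsm k g - nsm (m * (k div m)) g" by (simp add: algebra_simps)
    moreover have "nsm (m * (k div m)) g \<in> H" using subgrp_nsm[OF sg mH, of "k div m"] by (simp add: nsm_mult)
    ultimately have "nsm (k mod m) g \<in> H" using subgrp_diff[OF sg kH] by simp
    moreover have "k mod m < m" using m0 by simp
    ultimately have "k mod m = 0" using mmin by (metis neq0_conv)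
    then show "m dvd k" by auto
  qed
  have cval: "c (nsm (m * q) g) = z ^ (m * q)" for q
    using hom_on_nsm[OF sg hc mH, of q] zm by (simp add: nsm_mult power_mult)
  have aux: "c a * z ^ k = c a' * z ^ k'"
    if "a \<in> H" "a' \<in> H" "a + nsm k g = a' + nsm k' g" "k' \<le> k" for a a' k k'
  proof -
    define d where "d = k - k'"
    have kk: "k = d + k'" using that(4) by (simp add: d_def)
    have "a + nsm d g + nsm k' g = a' + nsm k' g" using that(3) by (simp add: kk nsm_add add.assoc)
    then have a': "a' = a + nsm d g" by simp
    then have "nsm d g = a' - a" by simp
    then have "nsm d g \<in> H" using subgrp_diff[OF sg that(2) that(1)] by simp
    then obtain q where dq: "d = m * q" using dvd by auto
    have "c a' = c a * c (nsm d g)" using a' hc \<open>nsm d g \<in> H\<close> that(1) unfolding hom_on_def by simp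
    also have "\<dots> = c a * z ^ d" using cval dq by simp
    finally show ?thesis by (simp add: kk power_add)
  qed
  have wd: "c a * z ^ k = c a' * z ^ k'"
    if "a \<in> H" "a' \<in> H" "a + nsm k g = a' + nsm k' g" for a a' k k'
  proof (cases "k' \<le> k")
    case True then show ?thesis using aux that by blast
  next
    case False then show ?thesis using aux[of a' a k' k] that by simp
  qed
  define c' where "c' x = (SOME w. \<exists>a k. a \<in> H \<and> x = a + nsm k g \<and> w = c a * z ^ k)" for x
  have c'val: "c' (a + nsm k g) = c a * z ^ k" if "a \<in> H" for a k
  proof -
    have "\<exists>w. \<exists>a' k'. a' \<in> H \<and> a + nsm k g = a' + nsm k' g \<and> w = c a' * z ^ k'"
      using that by blast
    from someI_ex[OF this] obtain a' k' where "a' \<in> H" "a + nsm k g = a' + nsm k' g"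
      "c' (a + nsm k g) = c a' * z ^ k'" unfolding c'_def by blast
    then show ?thesis using wd[OF that] by metis
  qed
  let ?H = "{a + nsm k g | a k. a \<in> H}"
  have c0: "c 0 = 1" using hom_on_zero[OF sg hc] .
  have "subgrp ?H"
    unfolding subgrp_def
  proof (intro conjI ballI)
    show "0 \<in> ?H" using sg unfolding subgrp_def by (metis (mono_tags, lifting) add_0_right mem_Collect_eq nsm.simps(1))
  next
    fix x y assume "x \<in> ?H" "y \<in> ?H"
    then obtain a k b l where "a \<in> H" "b \<in> H" "x = a + nsm k g" "y = b + nsm l g" by blast
    then have "x + y = (a + b) + nsm (k + l) g" "a + b \<in> H"
      using sg unfolding subgrp_def by (auto simp: nsm_add algebra_simps)
    then show "x + y \<in> ?H" by blast
  next
    fix x assume "x \<in> ?H"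
    then obtain a k where ak: "a \<in> H" "x = a + nsm k g" by blast
    have kle: "k \<le> m * k" using m0 by (cases m) auto
    have "nsm (m * k) g = nsm (m * k - k) g + nsm k g"
      using nsm_add[of "m*k-k" k g] kle by simp
    then have "- x = (- a - nsm (m * k) g) + nsm (m * k - k) g" using ak by (simp add: algebra_simps)
    moreover have "- a - nsm (m * k) g \<in> H"
      using sg ak(1) subgrp_nsm[OF sg mH, of k] unfolding subgrp_def
      by (metis diff_conv_add_uminus nsm_mult)
    ultimately show "- x \<in> ?H" by blast
  qed
  moreover have "hom_on ?H c'"
    unfolding hom_on_def
  proof (intro conjI ballI)
    fix x y assume "x \<in> ?H" "y \<in> ?H"
    then obtain a k b l where ab: "a \<in> H" "b \<in> H" "x = a + nsm k g" "y = b + nsm l g" by blast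
    then have "x + y = (a + b) + nsm (k + l) g" "a + b \<in> H"
      using sg unfolding subgrp_def by (auto simp: nsm_add algebra_simps)
    then have "c' (x + y) = c (a + b) * z ^ (k + l)" using c'val by simp
    also have "\<dots> = (c a * z ^ k) * (c b * z ^ l)" using hc ab unfolding hom_on_def by (simp add: power_add)
    finally show "c' (x + y) = c' x * c' y" using c'val ab by simp
  next
    fix x assume "x \<in> ?H"
    then obtain a k where ak: "a \<in> H" "x = a + nsm k g" by blast
    then show "cmod (c' x) = 1" using c'val hc z1 unfolding hom_on_def by (simp add: norm_mult norm_power)
  qed
  moreover have "\<forall>a\<in>H. c' a = c a" using c'val[of _ 0] by simp
  moreover have "c' g = z" using c'val[of 0 1] sg c0 unfolding subgrp_def by simp
  ultimately show ?thesis by blast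
qed

lemma ext_all:
  fixes H :: "'a::{finite,ab_group_add} set"
  shows "subgrp H \<Longrightarrow> hom_on H c \<Longrightarrow> \<exists>ch. is_character ch \<and> (\<forall>a\<in>H. ch a = c a)"
proof (induction "card (UNIV - H)" arbitrary: H c rule: less_induct)
  case less
  show ?case
  proof (cases "H = UNIV")
    case True
    then have "is_character c" using less.prems unfolding hom_on_def is_character_def by simp
    then show ?thesis by blast
  next
    case False
    then obtain g where gH: "g \<notin> H" by blast
    obtain n where n: "0 < n" "nsm n g = 0" using ex_order[of g] by blast
    have ex: "\<exists>k. 0 < k \<and> nsm k g \<in> H" using n less.prems(1) unfolding subgrp_def by auto
    define m where "m = (LEAST k. 0 < k \<and> nsm k g \<in> H)"
    have m: "0 < m \<and> nsm m g \<in> H" unfolding m_def by (rule LeastI_ex[OF ex])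
    have mmin: "\<forall>k. 0 < k \<and> k < m \<longrightarrow> nsm k g \<notin> H"
      unfolding m_def using not_less_Least by blast
    define w where "w = c (nsm m g)"
    have w1: "cmod w = 1" using less.prems(2) m unfolding hom_on_def w_def by simp
    then have wnz: "w \<noteq> 0" by auto
    define z where "z = cis (Arg w / real m)"
    have z1: "cmod z = 1" by (simp add: z_def)
    have "z ^ m = cis (real m * (Arg w / real m))" unfolding z_def by (rule Complex.DeMoivre)
    also have "\<dots> = cis (Arg w)" using m by simp
    also have "\<dots> = sgn w" using Arg_correct[OF wnz] by simp
    also have "\<dots> = w" using w1 by (simp add: sgn_div_norm)
    finally have zm: "z ^ m = c (nsm m g)" by (simp add: w_def)
    obtain c' where c': "subgrp {a + nsm k g | a k. a \<in> H}" "hom_on {a + nsm k g | a k. a \<in> H} c'"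
      "\<forall>a\<in>H. c' a = c a" "c' g = z"
      using ext_step[OF less.prems gH _ _ mmin z1 zm] m by blast
    let ?H = "{a + nsm k g | a k. a \<in> H}"
    have HH: "H \<subseteq> ?H" by (force intro: exI[of _ 0])
    have gH': "g \<in> ?H" using less.prems(1) unfolding subgrp_def
      by (metis (mono_tags, lifting) add_0 mem_Collect_eq nsm_one)
    have "UNIV - ?H \<subset> UNIV - H" using HH gH gH' by blast
    then have "card (UNIV - ?H) < card (UNIV - H)" by (rule psubset_card_mono[rotated]) simp
    from less.hyps[OF this c'(1) c'(2)] obtain ch where
      ch: "is_character ch" "\<forall>a\<in>?H. ch a = c' a" by blast
    have "\<forall>a\<in>H. ch a = c a"
    proof
      fix a assume "a \<in> H"
      then have "a \<in> ?H" using HH by blast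
      then show "ch a = c a" using ch(2) c'(3) \<open>a \<in> H\<close> by simp
    qed
    then show ?thesis using ch(1) by blast
  qed
qed

lemma char_sep:
  fixes x :: "'a::{finite,ab_group_add}"
  assumes x0: "x \<noteq> 0"
  shows "\<exists>ch. is_character ch \<and> ch x \<noteq> 1"
proof -
  let ?H = "{0::'a}"
  let ?c = "\<lambda>_::'a. (1::complex)"
  have sg: "subgrp ?H" by (simp add: subgrp_def)
  have hc: "hom_on ?H ?c" by (simp add: hom_on_def)
  obtain n where n: "0 < n" "nsm n x = 0" using ex_order[of x] by blast
  have ex: "\<exists>k. 0 < k \<and> nsm k x \<in> ?H" using n by auto
  define m where "m = (LEAST k. 0 < k \<and> nsm k x \<in> ?H)"
  have m: "0 < m \<and> nsm m x \<in> ?H" unfolding m_def by (rule LeastI_ex[OF ex])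
  have mmin: "\<forall>k. 0 < k \<and> k < m \<longrightarrow> nsm k x \<notin> ?H"
    unfolding m_def using not_less_Least by blast
  have m2: "2 \<le> m" using m x0 by (cases m; cases "m - 1") auto
  define z where "z = cis (2 * (pi / real m))"
  have z1: "cmod z = 1" by (simp add: z_def)
  have "z ^ m = cis (real m * (2 * (pi / real m)))" unfolding z_def by (rule Complex.DeMoivre)
  also have "\<dots> = cis (2 * pi)" using m by simp
  finally have "z ^ m = cis (2 * pi)" .
  then have zm: "z ^ m = ?c (nsm m x)" by simp
  have "pi / real m < 2"
  proof -
    have "pi / real m \<le> pi / 2" using m2 by (intro divide_left_mono) auto
    then show ?thesis using pi_less_4 by linarith
  qed
  then have "cos (2 * (pi / real m)) < 1" using m by (intro cos_double_less_one) auto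
  then have zne: "z \<noteq> 1" unfolding z_def by (metis cis.sel(1) one_complex.simps(1) order.irrefl)
  obtain c' where c': "subgrp {a + nsm k x | a k. a \<in> ?H}" "hom_on {a + nsm k x | a k. a \<in> ?H} c'"
      "c' x = z"
    using ext_step[OF sg hc _ _ _ mmin z1 zm] m x0 by blast
  have xH: "x \<in> {a + nsm k x | a k. a \<in> ?H}" by (force intro: exI[of _ 1])
  obtain ch where ch: "is_character ch" "\<forall>a\<in>{a + nsm k x | a k. a \<in> ?H}. ch a = c' a"
    using ext_all[OF c'(1,2)] by blast
  have "ch x = z" using ch(2) xH c'(3) by blast
  then show ?thesis using ch(1) zne by blast
qed



lemma ch_add: "is_character u \<Longrightarrow> u (x + y) = u x * u y"
  unfolding is_character_def by blast
lemma ch_norm: "is_character u \<Longrightarrow> cmod (u x) = 1"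
  unfolding is_character_def by blast
lemma ch_nz: "is_character u \<Longrightarrow> u x \<noteq> 0"
  by (metis ch_norm norm_zero zero_neq_one)
lemma ch_zero: "is_character u \<Longrightarrow> u 0 = 1"
proof -
  assume u: "is_character u"
  have "u 0 = u 0 * u 0" using ch_add[OF u, of 0 0] by simp
  then show ?thesis using ch_nz[OF u, of 0] by (metis mult_cancel_left2)
qed
lemma ch_cnj1: "is_character u \<Longrightarrow> u x * cnj (u x) = 1"
  using complex_norm_square[of "u x"] ch_norm[of u x] by simp
lemma ch_cnj2: "is_character u \<Longrightarrow> cnj (u x) * u x = 1"
  using ch_cnj1[of u x] by (simp add: mult.commute)
lemma ch_neg: "is_character u \<Longrightarrow> u (- x) = cnj (u x)"
proof -
  assume u: "is_character u"
  have "u x * u (- x) = 1" using ch_add[OF u, of x "-x"] ch_zero[OF u] by simp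
  then have "cnj (u x) * (u x * u (- x)) = cnj (u x)" by simp
  then show ?thesis using ch_cnj2[OF u, of x] by (simp add: mult.assoc[symmetric])
qed
lemma ch_diff: "is_character u \<Longrightarrow> u (x - y) = u x * cnj (u y)"
  using ch_add[of u x "-y"] ch_neg[of u y] by simp

lemma ch_mult: "is_character u \<Longrightarrow> is_character v \<Longrightarrow> is_character (\<lambda>x. u x * v x)"
  unfolding is_character_def by (simp add: norm_mult)
lemma ch_cnj: "is_character u \<Longrightarrow> is_character (\<lambda>x. cnj (u x))"
  unfolding is_character_def by simp
lemma ch_comp: "is_character u \<Longrightarrow> (\<forall>x y. \<theta> (x + y) = \<theta> x + \<theta> y) \<Longrightarrow> is_character (\<lambda>x. u (\<theta> x))"
  unfolding is_character_def by simp
lemma ch_one: "is_character (\<lambda>_. 1)"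
  unfolding is_character_def by simp

definition Chs :: "('a::ab_group_add \<Rightarrow> complex) set" where
  "Chs = {ch. is_character ch}"

lemma finite_Chs: "finite (Chs :: ('a::{finite,ab_group_add} \<Rightarrow> complex) set)"
proof -
  define R where "R = (\<Union>n\<in>{1..CARD('a)}. {z::complex. z ^ n = 1})"
  have fR: "finite R" unfolding R_def using finite_roots_unity by auto
  have "(Chs :: ('a \<Rightarrow> complex) set) \<subseteq> Pi UNIV (\<lambda>_. R)"
  proof
    fix u :: "'a \<Rightarrow> complex" assume "u \<in> Chs"
    then have u: "is_character u" by (simp add: Chs_def)
    have "\<forall>x. u x \<in> R"
    proof
      fix x :: 'a
      obtain n where n: "0 < n" "n \<le> CARD('a)" "nsm n x = 0" using ex_order[of x] by blast
      have sg: "subgrp (UNIV::'a set)" by (simp add: subgrp_def)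
      have hu: "hom_on UNIV u" using u unfolding hom_on_def is_character_def by simp
      have "u x ^ n = 1" using hom_on_nsm[OF sg hu, of x n] n ch_zero[OF u] by simp
      then show "u x \<in> R" unfolding R_def using n by auto
    qed
    then show "u \<in> Pi UNIV (\<lambda>_. R)" by (simp add: Pi_def)
  qed
  moreover have "finite (Pi UNIV (\<lambda>_::'a. R))"
    using finite_PiE[of UNIV "\<lambda>_::'a. R"] fR by (simp add: PiE_UNIV_domain)
  ultimately show ?thesis by (rule finite_subset)
qed

lemma one_Chs: "(\<lambda>_. 1) \<in> Chs" by (simp add: Chs_def ch_one)

lemma char_fun_one: "char_fun (\<mu>::'a::{finite,ab_group_add} pmf) (\<lambda>_. 1) = 1"
proof -
  have "(\<Sum>x\<in>UNIV. pmf \<mu> x) = 1" by (rule sum_pmf_eq_1) auto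
  moreover have "char_fun \<mu> (\<lambda>_. 1) = complex_of_real (\<Sum>x\<in>UNIV. pmf \<mu> x)"
    unfolding char_fun_def by simp
  ultimately show ?thesis by simp
qed

lemma char_fun_cnj: "char_fun \<mu> (\<lambda>x. cnj (u x)) = cnj (char_fun \<mu> u)"
  unfolding char_fun_def by simp

lemma char_fun_le1:
  assumes u: "is_character u"
  shows "cmod (char_fun (\<mu>::'a::{finite,ab_group_add} pmf) u) \<le> 1"
proof -
  have "cmod (char_fun \<mu> u) \<le> (\<Sum>x\<in>UNIV. cmod (complex_of_real (pmf \<mu> x) * u x))"
    unfolding char_fun_def by (rule norm_sum)
  also have "\<dots> = (\<Sum>x\<in>UNIV. pmf \<mu> x)" by (simp add: norm_mult ch_norm[OF u])
  also have "\<dots> = 1" by (rule sum_pmf_eq_1) auto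
  finally show ?thesis .
qed

lemma sum_map_pmf:
  fixes F :: "'b::finite \<Rightarrow> 'c::finite"
  shows "(\<Sum>z\<in>UNIV. complex_of_real (pmf (map_pmf F p) z) * G z)
       = (\<Sum>y\<in>UNIV. complex_of_real (pmf p y) * G (F y))"
proof -
  have "(LINT z|map_pmf F p. G z) = (\<Sum>z\<in>UNIV. pmf (map_pmf F p) z *\<^sub>R G z)"
    by (rule integral_measure_pmf) auto
  then have "(\<Sum>z\<in>UNIV. complex_of_real (pmf (map_pmf F p) z) * G z) = (LINT z|map_pmf F p. G z)"
    by (simp add: scaleR_conv_of_real)
  also have "\<dots> = (LINT y|p. G (F y))" by (rule integral_map_pmf)
  also have "\<dots> = (\<Sum>y\<in>UNIV. pmf p y *\<^sub>R G (F y))"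
    by (rule integral_measure_pmf) auto
  also have "\<dots> = (\<Sum>y\<in>UNIV. complex_of_real (pmf p y) * G (F y))"
    by (simp add: scaleR_conv_of_real)
  finally show ?thesis .
qed

lemma sum_pair_pmf:
  fixes H :: "'b::finite \<Rightarrow> 'c::finite \<Rightarrow> complex"
  shows "(\<Sum>y\<in>UNIV. complex_of_real (pmf (pair_pmf p q) y) * K y)
       = (\<Sum>a\<in>UNIV. \<Sum>b\<in>UNIV. complex_of_real (pmf p a) * complex_of_real (pmf q b) * K (a, b))"
proof -
  have "(\<Sum>y\<in>UNIV. complex_of_real (pmf (pair_pmf p q) y) * K y)
      = (\<Sum>y\<in>UNIV \<times> UNIV. complex_of_real (pmf (pair_pmf p q) y) * K y)" by simp
  also have "\<dots> = (\<Sum>a\<in>UNIV. \<Sum>b\<in>UNIV. complex_of_real (pmf (pair_pmf p q) (a, b)) * K (a, b))"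
    by (simp add: sum.cartesian_product case_prod_beta)
  also have "\<dots> = (\<Sum>a\<in>UNIV. \<Sum>b\<in>UNIV. complex_of_real (pmf p a) * complex_of_real (pmf q b) * K (a, b))"
    by (simp add: pmf_pair)
  finally show ?thesis .
qed

lemma heyde_eq:
  fixes \<alpha> :: "'a::{finite,ab_group_add} \<Rightarrow> 'a"
  assumes symm: "map_pmf (\<lambda>(\<xi>1, \<xi>2). (\<xi>1 + \<xi>2, \<xi>1 + \<alpha> \<xi>2)) (pair_pmf \<mu>1 \<mu>2)
             = map_pmf (\<lambda>(\<xi>1, \<xi>2). (\<xi>1 + \<xi>2, - (\<xi>1 + \<alpha> \<xi>2))) (pair_pmf \<mu>1 \<mu>2)"
    and u: "is_character u" and v: "is_character v"
  shows "char_fun \<mu>1 (\<lambda>x. u x * v x) * char_fun \<mu>2 (\<lambda>x. u x * v (\<alpha> x))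
       = char_fun \<mu>1 (\<lambda>x. u x * cnj (v x)) * char_fun \<mu>2 (\<lambda>x. u x * cnj (v (\<alpha> x)))"
proof -
  define G where "G = (\<lambda>(s::'a, d::'a). u s * v d)"
  let ?P = "\<lambda>a b. complex_of_real (pmf \<mu>1 a) * complex_of_real (pmf \<mu>2 b)"
  have L1: "(\<Sum>z\<in>UNIV. complex_of_real (pmf (map_pmf (\<lambda>(\<xi>1, \<xi>2). (\<xi>1 + \<xi>2, \<xi>1 + \<alpha> \<xi>2)) (pair_pmf \<mu>1 \<mu>2)) z) * G z)
     = (\<Sum>a\<in>UNIV. \<Sum>b\<in>UNIV. ?P a b * (u (a + b) * v (a + \<alpha> b)))"
    by (simp add: sum_map_pmf sum_pair_pmf G_def)
  have L2: "char_fun \<mu>1 (\<lambda>x. u x * v x) * char_fun \<mu>2 (\<lambda>x. u x * v (\<alpha> x))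
     = (\<Sum>a\<in>UNIV. \<Sum>b\<in>UNIV. (complex_of_real (pmf \<mu>1 a) * (u a * v a)) * (complex_of_real (pmf \<mu>2 b) * (u b * v (\<alpha> b))))"
    unfolding char_fun_def by (rule sum_product)
  have L3: "(\<Sum>a\<in>UNIV. \<Sum>b\<in>UNIV. ?P a b * (u (a + b) * v (a + \<alpha> b)))
     = (\<Sum>a\<in>UNIV. \<Sum>b\<in>UNIV. (complex_of_real (pmf \<mu>1 a) * (u a * v a)) * (complex_of_real (pmf \<mu>2 b) * (u b * v (\<alpha> b))))"
    by (intro sum.cong refl) (simp add: ch_add[OF u] ch_add[OF v] mult_ac)
  have vneg: "v (- a - \<alpha> b) = cnj (v a) * cnj (v (\<alpha> b))" for a b
    using ch_diff[OF v, of "-a" "\<alpha> b"] ch_neg[OF v, of a] by simp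
  have R1: "(\<Sum>z\<in>UNIV. complex_of_real (pmf (map_pmf (\<lambda>(\<xi>1, \<xi>2). (\<xi>1 + \<xi>2, - (\<xi>1 + \<alpha> \<xi>2))) (pair_pmf \<mu>1 \<mu>2)) z) * G z)
     = (\<Sum>a\<in>UNIV. \<Sum>b\<in>UNIV. ?P a b * (u (a + b) * v (- (a + \<alpha> b))))"
    by (simp add: sum_map_pmf sum_pair_pmf G_def)
  have R2: "char_fun \<mu>1 (\<lambda>x. u x * cnj (v x)) * char_fun \<mu>2 (\<lambda>x. u x * cnj (v (\<alpha> x)))
     = (\<Sum>a\<in>UNIV. \<Sum>b\<in>UNIV. (complex_of_real (pmf \<mu>1 a) * (u a * cnj (v a))) * (complex_of_real (pmf \<mu>2 b) * (u b * cnj (v (\<alpha> b)))))"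
    unfolding char_fun_def by (rule sum_product)
  have R3: "(\<Sum>a\<in>UNIV. \<Sum>b\<in>UNIV. ?P a b * (u (a + b) * v (- (a + \<alpha> b))))
     = (\<Sum>a\<in>UNIV. \<Sum>b\<in>UNIV. (complex_of_real (pmf \<mu>1 a) * (u a * cnj (v a))) * (complex_of_real (pmf \<mu>2 b) * (u b * cnj (v (\<alpha> b)))))"
    using vneg by (intro sum.cong refl) (simp add: ch_add[OF u] mult_ac)
  show ?thesis using L1 L2 L3 R1 R2 R3 symm by simp
qed



definition addh :: "('a::ab_group_add \<Rightarrow> 'a) \<Rightarrow> bool" where
  "addh \<theta> \<longleftrightarrow> (\<forall>x y. \<theta> (x + y) = \<theta> x + \<theta> y)"

lemma inv_addh: "bij \<theta> \<Longrightarrow> addh \<theta> \<Longrightarrow> addh (inv \<theta>)"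
  unfolding addh_def
proof (intro allI)
  fix x y
  assume b: "bij \<theta>" and a: "\<forall>x y. \<theta> (x + y) = \<theta> x + \<theta> y"
  have "\<theta> (inv \<theta> x + inv \<theta> y) = x + y"
    using a b by (simp add: bij_is_surj surj_f_inv_f)
  then show "inv \<theta> (x + y) = inv \<theta> x + inv \<theta> y"
    using b by (metis bij_is_inj inv_f_f)
qed

lemma reindex_comp:
  assumes b: "bij \<theta>" and a: "addh \<theta>"
  shows "bij_betw (\<lambda>v x. v (\<theta> x)) Chs Chs"
proof (rule bij_betw_byWitness[where f' = "\<lambda>v x. v (inv \<theta> x)"])
  have ai: "addh (inv \<theta>)" using inv_addh[OF b a] .
  show "\<forall>v\<in>Chs. (\<lambda>x. (\<lambda>x. v (\<theta> x)) (inv \<theta> x)) = v"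
    using b by (simp add: bij_is_surj surj_f_inv_f)
  show "\<forall>v\<in>Chs. (\<lambda>x. (\<lambda>x. v (inv \<theta> x)) (\<theta> x)) = v"
    using b by (simp add: bij_is_inj)
  show "(\<lambda>v x. v (\<theta> x)) ` Chs \<subseteq> Chs"
    using a by (auto simp: Chs_def addh_def intro: ch_comp)
  show "(\<lambda>v x. v (inv \<theta> x)) ` Chs \<subseteq> Chs"
    using ai by (auto simp: Chs_def addh_def intro: ch_comp)
qed

lemma reindex_shift:
  assumes w: "w \<in> Chs"
  shows "bij_betw (\<lambda>v x. v x * w x) Chs Chs"
proof (rule bij_betw_byWitness[where f' = "\<lambda>v x. v x * cnj (w x)"])
  have w': "is_character w" using w by (simp add: Chs_def)
  show "\<forall>v\<in>Chs. (\<lambda>x. v x * w x * cnj (w x)) = v"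
    using ch_cnj1[OF w'] by (simp add: mult.assoc)
  show "\<forall>v\<in>Chs. (\<lambda>x. v x * cnj (w x) * w x) = v"
    using ch_cnj2[OF w'] by (simp add: mult.assoc)
  show "(\<lambda>v x. v x * w x) ` Chs \<subseteq> Chs"
    using w' by (auto simp: Chs_def intro: ch_mult)
  show "(\<lambda>v x. v x * cnj (w x)) ` Chs \<subseteq> Chs"
    using w' by (auto simp: Chs_def intro: ch_mult ch_cnj)
qed

lemma prod_comp:
  assumes "bij \<theta>" "addh \<theta>"
  shows "(\<Prod>v\<in>Chs. F (\<lambda>x. v (\<theta> x))) = prod F Chs"
  using prod.reindex_bij_betw[OF reindex_comp[OF assms], of F] by simp

lemma prod_shift:
  assumes "w \<in> Chs"
  shows "(\<Prod>v\<in>Chs. F (\<lambda>x. v x * w x)) = prod F Chs"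
  using prod.reindex_bij_betw[OF reindex_shift[OF assms], of F] by simp

lemma prod_comp_shift:
  assumes "bij \<theta>" "addh \<theta>" "w \<in> Chs"
  shows "(\<Prod>v\<in>Chs. F (\<lambda>x. v (\<theta> x) * w x)) = prod F Chs"
  using prod_comp[OF assms(1,2), of "\<lambda>v. F (\<lambda>x. v x * w x)"] prod_shift[OF assms(3), of F] by simp

lemma prod_eq_1_each:
  fixes h :: "'b \<Rightarrow> real"
  assumes "finite A" "\<forall>a\<in>A. 0 \<le> h a \<and> h a \<le> 1" "prod h A = 1" "a \<in> A"
  shows "h a = 1"
proof -
  have "prod h A = h a * prod h (A - {a})" using assms(1,4) by (rule prod.remove)
  moreover have "prod h (A - {a}) \<le> 1" using assms(2) by (intro prod_le_1) auto
  moreover have "0 \<le> h a" using assms(2,4) by blast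
  moreover have "h a \<le> 1" using assms(2,4) by blast
  ultimately have "1 \<le> h a" using assms(3) mult_left_le[of "prod h (A - {a})" "h a"] by linarith
  then show ?thesis using \<open>h a \<le> 1\<close> by linarith
qed

lemma bij_dbl:
  assumes no2: "\<forall>x::'a::{finite,ab_group_add}. x + x = 0 \<longrightarrow> x = 0"
  shows "bij (\<lambda>x::'a. x + x)"
proof -
  have "inj (\<lambda>x::'a. x + x)"
  proof (rule injI)
    fix x y :: 'a assume "x + x = y + y"
    then have "(x - y) + (x - y) = 0" by (simp add: algebra_simps)
    then have "x - y = 0" using no2 by blast
    then show "x = y" by simp
  qed
  then show ?thesis using finite_UNIV_inj_surj[of "\<lambda>x::'a. x + x"] by (simp add: bij_def)
qed



lemma addh_diff: "addh \<theta> \<Longrightarrow> \<theta> (x - y) = \<theta> x - \<theta> y"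
  unfolding addh_def by (metis add_diff_cancel diff_add_cancel)

lemma addh_bij_comp: "bij f \<Longrightarrow> bij g \<Longrightarrow> bij (\<lambda>x. f (g x))"
  using bij_comp[of g f] by (simp add: o_def)

lemma key_prod:
  fixes \<alpha> :: "'a::{finite,ab_group_add} \<Rightarrow> 'a" and \<mu>1 \<mu>2 :: "'a pmf"
  assumes no2: "\<forall>x::'a. x + x = 0 \<longrightarrow> x = 0"
    and b\<alpha>: "bij \<alpha>" and a\<alpha>: "addh \<alpha>"
    and nv1: "\<forall>ch\<in>Chs. char_fun \<mu>1 ch \<noteq> 0" and nv2: "\<forall>ch\<in>Chs. char_fun \<mu>2 ch \<noteq> 0"
    and hey: "\<And>u v. u \<in> Chs \<Longrightarrow> v \<in> Chs \<Longrightarrow>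
       char_fun \<mu>1 (\<lambda>x. u x * v x) * char_fun \<mu>2 (\<lambda>x. u x * v (\<alpha> x))
       = char_fun \<mu>1 (\<lambda>x. u x * cnj (v x)) * char_fun \<mu>2 (\<lambda>x. u x * cnj (v (\<alpha> x)))"
  shows "\<forall>v\<in>Chs. cmod (char_fun \<mu>1 (\<lambda>x. v (x + \<alpha> x))) = 1 \<and> cmod (char_fun \<mu>2 (\<lambda>x. v (x + \<alpha> x))) = 1"
proof -
  have ch: "\<And>w. w \<in> Chs \<Longrightarrow> is_character w" by (simp add: Chs_def)
  define P where "P w = cmod (char_fun \<mu>1 w)" for w
  define Q where "Q w = cmod (char_fun \<mu>2 w)" for w
  define vS where "vS w = (\<lambda>x. w (x + \<alpha> x))" for w :: "'a \<Rightarrow> complex"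
  define vT where "vT w = (\<lambda>x. w (x - \<alpha> x))" for w :: "'a \<Rightarrow> complex"
  have aS: "addh (\<lambda>x. x + \<alpha> x)" using a\<alpha> unfolding addh_def by (simp add: algebra_simps)
  have aT: "addh (\<lambda>x. x - \<alpha> x)" using a\<alpha> unfolding addh_def by (simp add: algebra_simps)
  have aD: "addh (\<lambda>x::'a. x + x)" unfolding addh_def by (simp add: algebra_simps)
  have bD: "bij (\<lambda>x::'a. x + x)" using bij_dbl[OF no2] .
  have a2: "addh (\<lambda>x. \<alpha> x + \<alpha> x)" using a\<alpha> unfolding addh_def by (simp add: algebra_simps)
  have b2: "bij (\<lambda>x. \<alpha> x + \<alpha> x)" using addh_bij_comp[OF bD b\<alpha>] by simp
  have aa2: "addh (\<lambda>x. \<alpha> (\<alpha> x) + \<alpha> (\<alpha> x))" using a\<alpha> unfolding addh_def by (simp add: algebra_simps)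
  have ba2: "bij (\<lambda>x. \<alpha> (\<alpha> x) + \<alpha> (\<alpha> x))" using addh_bij_comp[OF b2 b\<alpha>] by simp
  have compC: "\<And>w \<theta>. w \<in> Chs \<Longrightarrow> addh \<theta> \<Longrightarrow> (\<lambda>x. w (\<theta> x)) \<in> Chs"
    by (simp add: Chs_def addh_def ch_comp)
  have multC: "\<And>w w'. w \<in> Chs \<Longrightarrow> w' \<in> Chs \<Longrightarrow> (\<lambda>x. w x * w' x) \<in> Chs"
    by (simp add: Chs_def ch_mult)
  have cnjC: "\<And>w. w \<in> Chs \<Longrightarrow> (\<lambda>x. cnj (w x)) \<in> Chs"
    by (simp add: Chs_def ch_cnj)
  have vSC: "\<And>w. w \<in> Chs \<Longrightarrow> vS w \<in> Chs" unfolding vS_def using compC aS by blast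
  have vTC: "\<And>w. w \<in> Chs \<Longrightarrow> vT w \<in> Chs" unfolding vT_def using compC aT by blast
  have Ppos: "\<And>w. w \<in> Chs \<Longrightarrow> 0 < P w \<and> P w \<le> 1"
    unfolding P_def using nv1 char_fun_le1 ch by auto
  have Qpos: "\<And>w. w \<in> Chs \<Longrightarrow> 0 < Q w \<and> Q w \<le> 1"
    unfolding Q_def using nv2 char_fun_le1 ch by auto
  have fin: "finite (Chs :: ('a \<Rightarrow> complex) set)" by (rule finite_Chs)
  define N where "N = card (Chs :: ('a \<Rightarrow> complex) set)"
  have N0: "0 < N" unfolding N_def using fin one_Chs card_gt_0_iff by blast

  have E2: "P (vS w) * Q (\<lambda>x. w (\<alpha> x + \<alpha> x)) = P (vT w)" if w: "w \<in> Chs" for w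
  proof -
    have wc: "is_character w" using ch[OF w] .
    have wa: "(\<lambda>x. w (\<alpha> x)) \<in> Chs" using compC[OF w a\<alpha>] .
    have h: "char_fun \<mu>1 (\<lambda>x. w (\<alpha> x) * w x) * char_fun \<mu>2 (\<lambda>x. w (\<alpha> x) * w (\<alpha> x))
       = char_fun \<mu>1 (\<lambda>x. w (\<alpha> x) * cnj (w x)) * char_fun \<mu>2 (\<lambda>x. w (\<alpha> x) * cnj (w (\<alpha> x)))"
      using hey[OF wa w] .
    have e1: "(\<lambda>x. w (\<alpha> x) * w x) = vS w" unfolding vS_def by (rule ext) (simp add: ch_add[OF wc] mult.commute)
    have e2: "(\<lambda>x. w (\<alpha> x) * w (\<alpha> x)) = (\<lambda>x. w (\<alpha> x + \<alpha> x))" by (rule ext) (simp add: ch_add[OF wc])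
    have e3: "(\<lambda>x. w (\<alpha> x) * cnj (w x)) = (\<lambda>x. cnj (vT w x))" unfolding vT_def
      by (rule ext) (simp add: ch_diff[OF wc] mult.commute)
    have e4: "(\<lambda>x. w (\<alpha> x) * cnj (w (\<alpha> x))) = (\<lambda>_. 1)" by (rule ext) (simp add: ch_cnj1[OF wc])
    have "char_fun \<mu>1 (vS w) * char_fun \<mu>2 (\<lambda>x. w (\<alpha> x + \<alpha> x)) = cnj (char_fun \<mu>1 (vT w))"
      using h unfolding e1 e2 e3 e4 char_fun_cnj char_fun_one by simp
    then show ?thesis unfolding P_def Q_def by (metis complex_mod_cnj norm_mult)
  qed
  have E1: "P (\<lambda>x. w (x + x)) * Q (vS w) = Q (vT w)" if w: "w \<in> Chs" for w
  proof -
    have wc: "is_character w" using ch[OF w] .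
    have h: "char_fun \<mu>1 (\<lambda>x. w x * w x) * char_fun \<mu>2 (\<lambda>x. w x * w (\<alpha> x))
       = char_fun \<mu>1 (\<lambda>x. w x * cnj (w x)) * char_fun \<mu>2 (\<lambda>x. w x * cnj (w (\<alpha> x)))"
      using hey[OF w w] .
    have e1: "(\<lambda>x. w x * w x) = (\<lambda>x. w (x + x))" by (rule ext) (simp add: ch_add[OF wc])
    have e2: "(\<lambda>x. w x * w (\<alpha> x)) = vS w" unfolding vS_def by (rule ext) (simp add: ch_add[OF wc])
    have e3: "(\<lambda>x. w x * cnj (w x)) = (\<lambda>_. 1)" by (rule ext) (simp add: ch_cnj1[OF wc])
    have e4: "(\<lambda>x. w x * cnj (w (\<alpha> x))) = vT w" unfolding vT_def by (rule ext) (simp add: ch_diff[OF wc])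
    have "char_fun \<mu>1 (\<lambda>x. w (x + x)) * char_fun \<mu>2 (vS w) = char_fun \<mu>2 (vT w)"
      using h unfolding e1 e2 e3 e4 char_fun_one by simp
    then show ?thesis unfolding P_def Q_def by (metis norm_mult)
  qed
  define A1 where "A1 u c = (\<lambda>x. u (x + x) * cnj (c (x - \<alpha> x)))" for u c :: "'a \<Rightarrow> complex"
  define B1 where "B1 u c = (\<lambda>x. u x * (u (\<alpha> x) * cnj (c (\<alpha> x - \<alpha> (\<alpha> x)))))" for u c :: "'a \<Rightarrow> complex"
  define D1 where "D1 u c = (\<lambda>x. u x * (cnj (u (\<alpha> x)) * c (\<alpha> x - \<alpha> (\<alpha> x))))" for u c :: "'a \<Rightarrow> complex"
  have E4: "P (A1 u c) * Q (B1 u c) = P (vT c) * Q (D1 u c)" if u: "u \<in> Chs" and c: "c \<in> Chs" for u c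
  proof -
    have uc: "is_character u" using ch[OF u] .
    have cc: "is_character c" using ch[OF c] .
    have wC: "(\<lambda>x. cnj (c (x - \<alpha> x))) \<in> Chs" using cnjC[OF vTC[OF c]] unfolding vT_def .
    have vC: "(\<lambda>x. u x * cnj (c (x - \<alpha> x))) \<in> Chs" using multC[OF u wC] .
    have h: "char_fun \<mu>1 (\<lambda>x. u x * (u x * cnj (c (x - \<alpha> x))))
        * char_fun \<mu>2 (\<lambda>x. u x * (u (\<alpha> x) * cnj (c (\<alpha> x - \<alpha> (\<alpha> x)))))
       = char_fun \<mu>1 (\<lambda>x. u x * cnj (u x * cnj (c (x - \<alpha> x))))
        * char_fun \<mu>2 (\<lambda>x. u x * cnj (u (\<alpha> x) * cnj (c (\<alpha> x - \<alpha> (\<alpha> x)))))"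
      using hey[OF u vC] by simp
    have e1: "(\<lambda>x. u x * (u x * cnj (c (x - \<alpha> x)))) = A1 u c" unfolding A1_def
      by (rule ext) (simp add: ch_add[OF uc] mult.assoc)
    have e3: "(\<lambda>x. u x * cnj (u x * cnj (c (x - \<alpha> x)))) = vT c" unfolding vT_def
      by (rule ext) (simp add: mult.assoc[symmetric] ch_cnj1[OF uc])
    have e4: "(\<lambda>x. u x * cnj (u (\<alpha> x) * cnj (c (\<alpha> x - \<alpha> (\<alpha> x))))) = D1 u c" unfolding D1_def
      by (rule ext) simp
    have "char_fun \<mu>1 (A1 u c) * char_fun \<mu>2 (B1 u c) = char_fun \<mu>1 (vT c) * char_fun \<mu>2 (D1 u c)"
      using h unfolding e1 e3 e4 B1_def by simp
    then show ?thesis unfolding P_def Q_def by (metis norm_mult)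
  qed
  have pA: "(\<Prod>u\<in>Chs. P (A1 u c)) = prod P Chs" if c: "c \<in> Chs" for c
  proof -
    have wC: "(\<lambda>x. cnj (c (x - \<alpha> x))) \<in> Chs" using cnjC[OF vTC[OF c]] unfolding vT_def .
    show ?thesis unfolding A1_def using prod_comp_shift[OF bD aD wC, of P] by simp
  qed
  have qB: "(\<Prod>u\<in>Chs. Q (B1 u c)) = (\<Prod>u\<in>Chs. Q (\<lambda>x. c (\<alpha> (\<alpha> x) + \<alpha> (\<alpha> x)) * vS u x))"
    if c: "c \<in> Chs" for c
  proof -
    have cc: "is_character c" using ch[OF c] .
    have caC: "(\<lambda>x. c (\<alpha> x)) \<in> Chs" using compC[OF c a\<alpha>] .
    have "(\<Prod>u\<in>Chs. Q (B1 u c)) = (\<Prod>u\<in>Chs. Q (B1 (\<lambda>x. u x * c (\<alpha> x)) c))"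
      using prod_shift[OF caC, of "\<lambda>u. Q (B1 u c)"] by simp
    also have "\<dots> = (\<Prod>u\<in>Chs. Q (\<lambda>x. c (\<alpha> (\<alpha> x) + \<alpha> (\<alpha> x)) * vS u x))"
    proof (rule prod.cong[OF refl])
      fix u :: "'a \<Rightarrow> complex" assume u: "u \<in> Chs"
      have uc: "is_character u" using ch[OF u] .
      have "B1 (\<lambda>x. u x * c (\<alpha> x)) c = (\<lambda>x. c (\<alpha> (\<alpha> x) + \<alpha> (\<alpha> x)) * vS u x)"
      proof (rule ext)
        fix x
        have "B1 (\<lambda>x. u x * c (\<alpha> x)) c x
            = (u x * u (\<alpha> x)) * (c (\<alpha> (\<alpha> x)) * c (\<alpha> (\<alpha> x))) * (c (\<alpha> x) * cnj (c (\<alpha> x)))"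
          unfolding B1_def by (simp add: ch_diff[OF cc] mult_ac)
        also have "\<dots> = c (\<alpha> (\<alpha> x) + \<alpha> (\<alpha> x)) * vS u x"
          unfolding vS_def by (simp add: ch_cnj1[OF cc] ch_add[OF cc] ch_add[OF uc] mult.commute)
        finally show "B1 (\<lambda>x. u x * c (\<alpha> x)) c x = c (\<alpha> (\<alpha> x) + \<alpha> (\<alpha> x)) * vS u x" .
      qed
      then show "Q (B1 (\<lambda>x. u x * c (\<alpha> x)) c) = Q (\<lambda>x. c (\<alpha> (\<alpha> x) + \<alpha> (\<alpha> x)) * vS u x)" by simp
    qed
    finally show ?thesis .
  qed
  have qD: "(\<Prod>u\<in>Chs. Q (D1 u c)) = (\<Prod>u\<in>Chs. Q (vT u))" if c: "c \<in> Chs" for c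
  proof -
    have cc: "is_character c" using ch[OF c] .
    have caC: "(\<lambda>x. cnj (c (\<alpha> x))) \<in> Chs" using cnjC[OF compC[OF c a\<alpha>]] .
    have "(\<Prod>u\<in>Chs. Q (D1 u c)) = (\<Prod>u\<in>Chs. Q (D1 (\<lambda>x. u x * cnj (c (\<alpha> x))) c))"
      using prod_shift[OF caC, of "\<lambda>u. Q (D1 u c)"] by simp
    also have "\<dots> = (\<Prod>u\<in>Chs. Q (vT u))"
    proof (rule prod.cong[OF refl])
      fix u :: "'a \<Rightarrow> complex" assume u: "u \<in> Chs"
      have uc: "is_character u" using ch[OF u] .
      have "D1 (\<lambda>x. u x * cnj (c (\<alpha> x))) c = vT u"
      proof (rule ext)
        fix x
        have "D1 (\<lambda>x. u x * cnj (c (\<alpha> x))) c x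
            = (u x * cnj (u (\<alpha> x))) * (c (\<alpha> x) * cnj (c (\<alpha> x))) * (c (\<alpha> (\<alpha> x)) * cnj (c (\<alpha> (\<alpha> x))))"
          unfolding D1_def by (simp add: ch_diff[OF cc] mult_ac)
        also have "\<dots> = vT u x"
          unfolding vT_def by (simp add: ch_cnj1[OF cc] ch_diff[OF uc])
        finally show "D1 (\<lambda>x. u x * cnj (c (\<alpha> x))) c x = vT u x" .
      qed
      then show "Q (D1 (\<lambda>x. u x * cnj (c (\<alpha> x))) c) = Q (vT u)" by simp
    qed
    finally show ?thesis .
  qed
  define PP where "PP = prod P Chs"
  define QQ where "QQ = prod Q Chs"
  define XT where "XT = (\<Prod>c\<in>Chs. P (vT c))"
  define YT where "YT = (\<Prod>c\<in>Chs. Q (vT c))"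
  define XS where "XS = (\<Prod>c\<in>Chs. P (vS c))"
  define YS where "YS = (\<Prod>c\<in>Chs. Q (vS c))"
  have L: "(\<Prod>c\<in>Chs. \<Prod>u\<in>Chs. P (A1 u c) * Q (B1 u c)) = PP ^ N * QQ ^ N"
  proof -
    have "(\<Prod>c\<in>Chs. \<Prod>u\<in>Chs. P (A1 u c) * Q (B1 u c))
        = (\<Prod>c\<in>Chs. PP * (\<Prod>u\<in>Chs. Q (\<lambda>x. c (\<alpha> (\<alpha> x) + \<alpha> (\<alpha> x)) * vS u x)))"
      by (rule prod.cong[OF refl]) (simp add: prod.distrib pA qB PP_def)
    also have "\<dots> = PP ^ N * (\<Prod>c\<in>Chs. \<Prod>u\<in>Chs. Q (\<lambda>x. c (\<alpha> (\<alpha> x) + \<alpha> (\<alpha> x)) * vS u x))"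
      by (simp add: prod.distrib N_def)
    also have "(\<Prod>c\<in>Chs. \<Prod>u\<in>Chs. Q (\<lambda>x. c (\<alpha> (\<alpha> x) + \<alpha> (\<alpha> x)) * vS u x))
        = (\<Prod>u\<in>Chs. \<Prod>c\<in>Chs. Q (\<lambda>x. c (\<alpha> (\<alpha> x) + \<alpha> (\<alpha> x)) * vS u x))"
      by (rule prod.swap)
    also have "\<dots> = (\<Prod>u\<in>(Chs::('a \<Rightarrow> complex) set). QQ)"
    proof (rule prod.cong[OF refl])
      fix u :: "'a \<Rightarrow> complex" assume u: "u \<in> Chs"
      show "(\<Prod>c\<in>Chs. Q (\<lambda>x. c (\<alpha> (\<alpha> x) + \<alpha> (\<alpha> x)) * vS u x)) = QQ"
        using prod_comp_shift[OF ba2 aa2 vSC[OF u], of Q] by (simp add: QQ_def)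
    qed
    also have "\<dots> = QQ ^ N" by (simp add: N_def)
    finally show ?thesis .
  qed
  have R: "(\<Prod>c\<in>Chs. \<Prod>u\<in>Chs. P (vT c) * Q (D1 u c)) = XT ^ N * YT ^ N"
  proof -
    have "(\<Prod>c\<in>Chs. \<Prod>u\<in>Chs. P (vT c) * Q (D1 u c)) = (\<Prod>c\<in>Chs. P (vT c) ^ N * YT)"
      by (rule prod.cong[OF refl]) (simp add: prod.distrib qD YT_def N_def)
    also have "\<dots> = XT ^ N * YT ^ N"
      by (simp add: prod.distrib N_def XT_def prod_power_distrib)
    finally show ?thesis .
  qed
  have "(\<Prod>c\<in>Chs. \<Prod>u\<in>Chs. P (A1 u c) * Q (B1 u c)) = (\<Prod>c\<in>Chs. \<Prod>u\<in>Chs. P (vT c) * Q (D1 u c))"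
    using E4 by (intro prod.cong refl) simp
  then have "(PP * QQ) ^ N = (XT * YT) ^ N" using L R by (simp add: power_mult_distrib)
  moreover have "0 \<le> PP * QQ" unfolding PP_def QQ_def using Ppos Qpos
    by (intro mult_nonneg_nonneg prod_nonneg) (auto intro: less_imp_le)
  moreover have "0 \<le> XT * YT" unfolding XT_def YT_def using Ppos Qpos vTC
    by (intro mult_nonneg_nonneg prod_nonneg) (auto intro: less_imp_le)
  ultimately have eq4: "PP * QQ = XT * YT" using N0 by (metis power_eq_imp_eq_base)
  have eq2: "XS * QQ = XT"
  proof -
    have "(\<Prod>w\<in>Chs. P (vS w) * Q (\<lambda>x. w (\<alpha> x + \<alpha> x))) = XT"
      unfolding XT_def using E2 by (intro prod.cong refl) simp
    then show ?thesis by (simp add: prod.distrib XS_def QQ_def prod_comp[OF b2 a2])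
  qed
  have eq1: "PP * YS = YT"
  proof -
    have "(\<Prod>w\<in>Chs. P (\<lambda>x. w (x + x)) * Q (vS w)) = YT"
      unfolding YT_def using E1 by (intro prod.cong refl) simp
    then show ?thesis by (simp add: prod.distrib YS_def PP_def prod_comp[OF bD aD])
  qed
  have PQpos: "0 < PP * QQ" unfolding PP_def QQ_def using Ppos Qpos
    by (intro mult_pos_pos prod_pos) auto
  have "PP * QQ * (XS * YS) = (XS * QQ) * (PP * YS)" by (simp add: mult_ac)
  also have "\<dots> = XT * YT" using eq2 eq1 by simp
  also have "\<dots> = PP * QQ * 1" using eq4 by simp
  finally have "PP * QQ * (XS * YS) = PP * QQ * 1" .
  then have XY1: "XS * YS = 1" using PQpos by (metis mult_left_cancel less_irrefl)
  have XS01: "0 \<le> XS \<and> XS \<le> 1" unfolding XS_def using Ppos vSC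
    by (intro conjI prod_nonneg prod_le_1) (auto intro: less_imp_le)
  have YS01: "0 \<le> YS \<and> YS \<le> 1" unfolding YS_def using Qpos vSC
    by (intro conjI prod_nonneg prod_le_1) (auto intro: less_imp_le)
  have XS1: "XS = 1"
  proof -
    have "XS * YS \<le> XS" using XS01 YS01 mult_left_le by blast
    then show ?thesis using XY1 XS01 by linarith
  qed
  have YS1: "YS = 1"
  proof -
    have "XS * YS \<le> YS" using XS01 YS01 mult_left_le[of XS YS] by (simp add: mult.commute)
    then show ?thesis using XY1 YS01 by linarith
  qed
  show ?thesis
  proof
    fix v :: "'a \<Rightarrow> complex" assume v: "v \<in> Chs"
    have "(\<lambda>w. P (vS w)) v = 1"
      by (rule prod_eq_1_each[OF fin _ XS1[unfolded XS_def] v]) (use Ppos vSC in \<open>auto intro: less_imp_le\<close>)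
    moreover have "(\<lambda>w. Q (vS w)) v = 1"
      by (rule prod_eq_1_each[OF fin _ YS1[unfolded YS_def] v]) (use Qpos vSC in \<open>auto intro: less_imp_le\<close>)
    ultimately show "cmod (char_fun \<mu>1 (\<lambda>x. v (x + \<alpha> x))) = 1 \<and> cmod (char_fun \<mu>2 (\<lambda>x. v (x + \<alpha> x))) = 1"
      unfolding P_def Q_def vS_def by simp
  qed
qed



lemma support_const:
  fixes \<mu> :: "'a::{finite,ab_group_add} pmf"
  assumes w: "is_character w" and n1: "cmod (char_fun \<mu> w) = 1" and x: "x \<in> set_pmf \<mu>"
  shows "w x = char_fun \<mu> w"
proof -
  define s where "s = char_fun \<mu> w"
  have ss: "s * cnj s = 1" using complex_norm_square[of s] n1 by (simp add: s_def)
  have "cnj s * s = cnj s * (\<Sum>y\<in>UNIV. complex_of_real (pmf \<mu> y) * w y)"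
    by (simp add: s_def char_fun_def)
  also have "\<dots> = (\<Sum>y\<in>UNIV. complex_of_real (pmf \<mu> y) * (cnj s * w y))"
    by (simp add: sum_distrib_left mult_ac)
  finally have "cnj s * s = (\<Sum>y\<in>UNIV. complex_of_real (pmf \<mu> y) * (cnj s * w y))" .
  then have "Re (cnj s * s) = (\<Sum>y\<in>UNIV. pmf \<mu> y * Re (cnj s * w y))"
    by (simp add: Re_sum)
  then have S1: "(\<Sum>y\<in>UNIV. pmf \<mu> y * Re (cnj s * w y)) = 1" using ss by (simp add: mult.commute)
  have S0: "(\<Sum>y\<in>UNIV. pmf \<mu> y) = 1" by (rule sum_pmf_eq_1) auto
  have le: "Re (cnj s * w y) \<le> 1" for y
  proof -
    have "Re (cnj s * w y) \<le> cmod (cnj s * w y)" by (rule complex_Re_le_cmod)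
    also have "\<dots> = 1" using n1 ch_norm[OF w, of y] by (simp add: norm_mult s_def)
    finally show ?thesis .
  qed
  have "(\<Sum>y\<in>UNIV. pmf \<mu> y * (1 - Re (cnj s * w y))) = 0"
    using S0 S1 by (simp add: right_diff_distrib sum_subtractf)
  moreover have "\<forall>y\<in>UNIV. 0 \<le> pmf \<mu> y * (1 - Re (cnj s * w y))"
    using le by (simp add: pmf_nonneg)
  ultimately have "pmf \<mu> x * (1 - Re (cnj s * w x)) = 0"
    using sum_nonneg_eq_0_iff[of UNIV "\<lambda>y. pmf \<mu> y * (1 - Re (cnj s * w y))"] by simp
  moreover have "pmf \<mu> x \<noteq> 0" using x by (simp add: set_pmf_iff)
  ultimately have re1: "Re (cnj s * w x) = 1" by simp
  have nm: "cmod (cnj s * w x) = 1" using n1 ch_norm[OF w, of x] by (simp add: norm_mult s_def)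
  have "(cmod (cnj s * w x))\<^sup>2 = (Re (cnj s * w x))\<^sup>2 + (Im (cnj s * w x))\<^sup>2"
    by (rule cmod_power2)
  then have "Im (cnj s * w x) = 0" using re1 nm by simp
  then have z1: "cnj s * w x = 1" using re1 by (simp add: complex_eq_iff)
  have "w x = (s * cnj s) * w x" using ss by simp
  also have "\<dots> = s" using z1 by (simp add: mult.assoc)
  finally show ?thesis by (simp add: s_def)
qed

lemma coset_support:
  fixes \<alpha> :: "'a::{finite,ab_group_add} \<Rightarrow> 'a" and \<mu> :: "'a pmf"
  assumes a\<alpha>: "addh \<alpha>"
    and one: "\<forall>v\<in>Chs. cmod (char_fun \<mu> (\<lambda>x. v (x + \<alpha> x))) = 1"
    and x: "x \<in> set_pmf \<mu>" and y: "y \<in> set_pmf \<mu>"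
  shows "(x - y) + \<alpha> (x - y) = 0"
proof (rule ccontr)
  assume ne: "(x - y) + \<alpha> (x - y) \<noteq> 0"
  obtain v where v: "is_character v" "v ((x - y) + \<alpha> (x - y)) \<noteq> 1" using char_sep[OF ne] by blast
  have aS: "addh (\<lambda>x. x + \<alpha> x)" using a\<alpha> unfolding addh_def by (simp add: algebra_simps)
  have w: "is_character (\<lambda>x. v (x + \<alpha> x))" using ch_comp[OF v(1), of "\<lambda>x. x + \<alpha> x"] aS unfolding addh_def by simp
  have vin: "v \<in> Chs" using v(1) by (simp add: Chs_def)
  have vxy: "v (x + \<alpha> x) = v (y + \<alpha> y)"
    using support_const[OF w _ x] support_const[OF w _ y] one vin by simp
  have eq: "(x - y) + \<alpha> (x - y) = (x + \<alpha> x) - (y + \<alpha> y)"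
    using addh_diff[OF a\<alpha>] by (simp add: algebra_simps)
  have "v ((x - y) + \<alpha> (x - y)) = v ((x + \<alpha> x) - (y + \<alpha> y))" by (simp only: eq)
  also have "\<dots> = v (x + \<alpha> x) * cnj (v (y + \<alpha> y))" by (rule ch_diff[OF v(1)])
  finally have "v ((x - y) + \<alpha> (x - y)) = v (y + \<alpha> y) * cnj (v (y + \<alpha> y))"
    using vxy by simp
  then show False using v(2) ch_cnj1[OF v(1)] by simp
qed

lemma conv_E: "\<omega> \<star>\<^sub>c E a = map_pmf (\<lambda>x. x + a) \<omega>"
  unfolding conv_pmf_def by (simp add: pair_return_pmf2 map_pmf_comp)



theorem theorem2p1:
  fixes \<alpha> :: "'a::{finite,ab_group_add} \<Rightarrow> 'a"
    and \<mu>1 \<mu>2 :: "'a pmf"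
  assumes no_order2: "\<forall>x::'a. x + x = 0 \<longrightarrow> x = 0"
    and aut: "group_automorphism \<alpha>"
    and nonvanish1: "\<forall>ch. is_character ch \<longrightarrow> char_fun \<mu>1 ch \<noteq> 0"
    and nonvanish2: "\<forall>ch. is_character ch \<longrightarrow> char_fun \<mu>2 ch \<noteq> 0"
    and symm: "map_pmf (\<lambda>(\<xi>1, \<xi>2). (\<xi>1 + \<xi>2, \<xi>1 + \<alpha> \<xi>2)) (pair_pmf \<mu>1 \<mu>2)
             = map_pmf (\<lambda>(\<xi>1, \<xi>2). (\<xi>1 + \<xi>2, - (\<xi>1 + \<alpha> \<xi>2))) (pair_pmf \<mu>1 \<mu>2)"
  shows "\<exists>\<omega> x1 x2. set_pmf \<omega> \<subseteq> {x. x + \<alpha> x = 0}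
            \<and> \<mu>1 = \<omega> \<star>\<^sub>c E x1 \<and> \<mu>2 = \<omega> \<star>\<^sub>c E x2"
proof -
  have b\<alpha>: "bij \<alpha>" using aut by (simp add: group_automorphism_def)
  have a\<alpha>: "addh \<alpha>" using aut by (simp add: group_automorphism_def addh_def)
  have nv1: "\<forall>ch\<in>Chs. char_fun \<mu>1 ch \<noteq> 0" using nonvanish1 by (simp add: Chs_def)
  have nv2: "\<forall>ch\<in>Chs. char_fun \<mu>2 ch \<noteq> 0" using nonvanish2 by (simp add: Chs_def)
  have hey: "char_fun \<mu>1 (\<lambda>x. u x * v x) * char_fun \<mu>2 (\<lambda>x. u x * v (\<alpha> x))
       = char_fun \<mu>1 (\<lambda>x. u x * cnj (v x)) * char_fun \<mu>2 (\<lambda>x. u x * cnj (v (\<alpha> x)))"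
    if "u \<in> Chs" "v \<in> Chs" for u v
    using heyde_eq[OF symm] that by (simp add: Chs_def)
  have kp: "\<forall>v\<in>Chs. cmod (char_fun \<mu>1 (\<lambda>x. v (x + \<alpha> x))) = 1 \<and> cmod (char_fun \<mu>2 (\<lambda>x. v (x + \<alpha> x))) = 1"
    using key_prod[OF no_order2 b\<alpha> a\<alpha> nv1 nv2 hey] by blast
  have one1: "\<forall>v\<in>Chs. cmod (char_fun \<mu>1 (\<lambda>x. v (x + \<alpha> x))) = 1" using kp by blast
  have one2: "\<forall>v\<in>Chs. cmod (char_fun \<mu>2 (\<lambda>x. v (x + \<alpha> x))) = 1" using kp by blast
  obtain x1 where x1: "x1 \<in> set_pmf \<mu>1" using set_pmf_not_empty by fast
  obtain x2 where x2: "x2 \<in> set_pmf \<mu>2" using set_pmf_not_empty by fast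
  define \<omega> where "\<omega> = map_pmf (\<lambda>x. x - x1) \<mu>1"
  have supp: "set_pmf \<omega> \<subseteq> {x. x + \<alpha> x = 0}"
  proof
    fix z assume "z \<in> set_pmf \<omega>"
    then obtain x where x: "x \<in> set_pmf \<mu>1" "z = x - x1" unfolding \<omega>_def by auto
    show "z \<in> {x. x + \<alpha> x = 0}" using coset_support[OF a\<alpha> one1 x(1) x1] x(2) by simp
  qed
  have m1: "\<mu>1 = \<omega> \<star>\<^sub>c E x1"
    unfolding conv_E \<omega>_def by (simp add: map_pmf_comp)
  define c where "c = x2 + \<alpha> x2"
  have bc: "b + \<alpha> b = c" if b: "b \<in> set_pmf \<mu>2" for b
  proof -
    have "(b - x2) + \<alpha> (b - x2) = 0" using coset_support[OF a\<alpha> one2 b x2] .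
    then show ?thesis unfolding c_def using addh_diff[OF a\<alpha>, of b x2] by (simp add: algebra_simps)
  qed
  have lhs: "map_pmf (\<lambda>(s, d). s + d) (map_pmf (\<lambda>(\<xi>1, \<xi>2). (\<xi>1 + \<xi>2, \<xi>1 + \<alpha> \<xi>2)) (pair_pmf \<mu>1 \<mu>2))
      = map_pmf (\<lambda>a. a + a + c) \<mu>1"
  proof -
    have "map_pmf (\<lambda>(s, d). s + d) (map_pmf (\<lambda>(\<xi>1, \<xi>2). (\<xi>1 + \<xi>2, \<xi>1 + \<alpha> \<xi>2)) (pair_pmf \<mu>1 \<mu>2))
        = map_pmf (\<lambda>p. fst p + fst p + c) (pair_pmf \<mu>1 \<mu>2)"
      unfolding map_pmf_comp
    proof (rule map_pmf_cong[OF refl])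
      fix p assume "p \<in> set_pmf (pair_pmf \<mu>1 \<mu>2)"
      then have "snd p \<in> set_pmf \<mu>2" by auto
      then have "snd p + \<alpha> (snd p) = c" by (rule bc)
      then show "(case case p of (\<xi>1, \<xi>2) \<Rightarrow> (\<xi>1 + \<xi>2, \<xi>1 + \<alpha> \<xi>2) of (s, d) \<Rightarrow> s + d) = fst p + fst p + c"
        by (cases p) (simp add: algebra_simps)
    qed
    also have "\<dots> = map_pmf (\<lambda>a. a + a + c) (map_pmf fst (pair_pmf \<mu>1 \<mu>2))"
      by (simp add: map_pmf_comp)
    finally show ?thesis by (simp add: map_fst_pair_pmf)
  qed
  have rhs: "map_pmf (\<lambda>(s, d). s + d) (map_pmf (\<lambda>(\<xi>1, \<xi>2). (\<xi>1 + \<xi>2, - (\<xi>1 + \<alpha> \<xi>2))) (pair_pmf \<mu>1 \<mu>2))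
      = map_pmf (\<lambda>b. b + b - c) \<mu>2"
  proof -
    have "map_pmf (\<lambda>(s, d). s + d) (map_pmf (\<lambda>(\<xi>1, \<xi>2). (\<xi>1 + \<xi>2, - (\<xi>1 + \<alpha> \<xi>2))) (pair_pmf \<mu>1 \<mu>2))
        = map_pmf (\<lambda>p. snd p + snd p - c) (pair_pmf \<mu>1 \<mu>2)"
      unfolding map_pmf_comp
    proof (rule map_pmf_cong[OF refl])
      fix p assume "p \<in> set_pmf (pair_pmf \<mu>1 \<mu>2)"
      then have "snd p \<in> set_pmf \<mu>2" by auto
      then have "snd p + \<alpha> (snd p) = c" by (rule bc)
      then show "(case case p of (\<xi>1, \<xi>2) \<Rightarrow> (\<xi>1 + \<xi>2, - (\<xi>1 + \<alpha> \<xi>2)) of (s, d) \<Rightarrow> s + d) = snd p + snd p - c"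
        by (cases p) (simp add: algebra_simps)
    qed
    also have "\<dots> = map_pmf (\<lambda>b. b + b - c) (map_pmf snd (pair_pmf \<mu>1 \<mu>2))"
      by (simp add: map_pmf_comp)
    finally show ?thesis by (simp add: map_snd_pair_pmf)
  qed
  have eq: "map_pmf (\<lambda>a. a + a + c) \<mu>1 = map_pmf (\<lambda>b. b + b - c) \<mu>2"
    using lhs rhs symm by simp
  define hf where "hf = inv (\<lambda>x::'a. x + x)"
  have hf: "hf (z + z) = z" for z
    unfolding hf_def using inv_f_f[OF bij_is_inj[OF bij_dbl[OF no_order2]], of z] by simp
  have "map_pmf (\<lambda>z. hf (z - c)) (map_pmf (\<lambda>a. a + a + c) \<mu>1)
      = map_pmf (\<lambda>z. hf (z - c)) (map_pmf (\<lambda>b. b + b - c) \<mu>2)" using eq by simp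
  moreover have "map_pmf (\<lambda>z. hf (z - c)) (map_pmf (\<lambda>a. a + a + c) \<mu>1) = \<mu>1"
  proof -
    have "(\<lambda>a. hf (a + a + c - c)) = (\<lambda>a. a)"
      by (rule ext) (simp add: hf)
    then show ?thesis by (simp add: map_pmf_comp)
  qed
  moreover have "map_pmf (\<lambda>z. hf (z - c)) (map_pmf (\<lambda>b. b + b - c) \<mu>2) = map_pmf (\<lambda>b. b - c) \<mu>2"
  proof -
    have "(\<lambda>b. hf (b + b - c - c)) = (\<lambda>b. hf ((b - c) + (b - c)))"
      by (rule ext) (simp add: algebra_simps)
    then show ?thesis by (simp add: map_pmf_comp hf)
  qed
  ultimately have "\<mu>1 = map_pmf (\<lambda>b. b - c) \<mu>2" by simp
  then have "map_pmf (\<lambda>z. z + c) \<mu>1 = \<mu>2" by (simp add: map_pmf_comp)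
  then have m2: "\<mu>2 = \<omega> \<star>\<^sub>c E (x1 + c)"
    unfolding conv_E \<omega>_def by (simp add: map_pmf_comp add.assoc)
  show ?thesis using supp m1 m2 by blast
qed

end
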